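(* Let $f_{\mathrm{cost}}:[0,1]\to[0,\infty)$ be concave with $f_{\mathrm{cost}}(0)=0$, and for a distribution $p$ let $F_{\mathrm{cost}}(p)=\sum_i f_{\mathrm{cost}}(p(i))$. Let $r\triangleq\max_{0<q<p\le1}\left(\frac{f_{\mathrm{cost}}(q)}{f_{\mathrm{cost}}(p)}-\frac qp\right)$. If $r<1$, then for every set $S$ of $m=2$ discrete probability distributions, the greedy coupling $\mathcal G_S$ satisfies $F_{\mathrm{cost}}(\mathcal G_S)\le\frac{1}{1-r}F_{\mathrm{cost}}(C)$ for every coupling $C$ of $S$; i.e., the greedy algorithm is a $\frac1{1-r}$-multiplicative approximation for the minimum-$F_{\mathrm{cost}}$ coupling.
   Context: A coupling of two distributions $p,q$ is a joint distribution with marginals $p$ and $q$; its cost is $F_{\mathrm{cost}}$ applied to its vector of probabilities. Greedy coupling algorithm: maintain the remaining masses of the states of each distribution in $S$. Repeatedly: let $r'=\min_{p\in S}\max_j p(j)$; if $r'=0$ stop; otherwise append $r'$ as the next state of $\mathcal G_S$ and subtract $r'$ from the largest remaining state of every distribution (ties broken arbitrarily). $\mathcal G_S$ is the resulting list of state masses. *)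

theory Defs
  imports "HOL-Analysis.Analysis"
begin

definition supp :: "('a \<Rightarrow> real) \<Rightarrow> 'a set" where
  "supp p = {x. p x \<noteq> 0}"

definition is_dist :: "('a \<Rightarrow> real) \<Rightarrow> bool" where
  "is_dist p \<longleftrightarrow> finite (supp p) \<and> (\<forall>x. 0 \<le> p x) \<and> sum p (supp p) = 1"

definition is_coupling :: "('a \<times> 'b \<Rightarrow> real) \<Rightarrow> ('a \<Rightarrow> real) \<Rightarrow> ('b \<Rightarrow> real) \<Rightarrow> bool" where
  "is_coupling C p q \<longleftrightarrow> is_dist C
     \<and> (\<forall>a. (\<Sum>b\<in>{b. C (a, b) \<noteq> 0}. C (a, b)) = p a)
     \<and> (\<forall>b. (\<Sum>a\<in>{a. C (a, b) \<noteq> 0}. C (a, b)) = q b)"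

text \<open>F_cost applied to the vector of probabilities (states of mass 0 contribute f 0 = 0).\<close>
definition F_cost :: "(real \<Rightarrow> real) \<Rightarrow> ('a \<Rightarrow> real) \<Rightarrow> real" where
  "F_cost f p = (\<Sum>x\<in>supp p. f (p x))"

definition maxmass :: "('a \<Rightarrow> real) \<Rightarrow> real" where
  "maxmass p = Max (insert 0 (p ` supp p))"

text \<open>The greedy coupling algorithm for two distributions, as a relation between the
  current remaining masses and the produced list of state masses; ties in choosing a
  largest remaining state are broken arbitrarily (any choice is a valid run).\<close>
inductive greedy_run :: "('a \<Rightarrow> real) \<Rightarrow> ('b \<Rightarrow> real) \<Rightarrow> real list \<Rightarrow> bool" where
  stop: "min (maxmass p) (maxmass q) = 0 \<Longrightarrow> greedy_run p q []"
| step: "\<lbrakk> r' = min (maxmass p) (maxmass q); r' \<noteq> 0;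
           p a = maxmass p; q b = maxmass q;
           greedy_run (p(a := p a - r')) (q(b := q b - r')) G \<rbrakk>
         \<Longrightarrow> greedy_run p q (r' # G)"

end

theory Submission
  imports Defs
begin


lemma cmp_gen:
  fixes h mu nu :: "real \<Rightarrow> real"
  assumes "finite V" "V \<noteq> {}"
    and "\<forall>s\<in>V. \<forall>t\<in>V. s \<le> t \<longrightarrow> h t \<le> h s"
    and "\<forall>t\<in>V. (\<Sum>v\<in>{v\<in>V. t \<le> v}. nu v - mu v) \<le> 0"
  shows "(\<Sum>v\<in>V. nu v - mu v) * h (Min V) \<le> (\<Sum>v\<in>V. (nu v - mu v) * h v)"
  using assms
proof (induction V rule: finite_linorder_min_induct)
  case empty
  then show ?case by simp
next
  case (insert b A)
  show ?case
  proof (cases "A = {}")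
    case True
    then show ?thesis by simp
  next
    case False
    have bA: "b \<notin> A" using insert.hyps(2) by auto
    have mono: "\<forall>s\<in>A. \<forall>t\<in>A. s \<le> t \<longrightarrow> h t \<le> h s" using insert.prems(2) by auto
    have tl: "\<forall>t\<in>A. (\<Sum>v\<in>{v\<in>A. t \<le> v}. nu v - mu v) \<le> 0"
    proof
      fix t assume tA: "t \<in> A"
      have "{v\<in>insert b A. t \<le> v} = {v\<in>A. t \<le> v}" using insert.hyps(2) tA by force
      then show "(\<Sum>v\<in>{v\<in>A. t \<le> v}. nu v - mu v) \<le> 0" using insert.prems(3) tA by force
    qed
    have IH: "(\<Sum>v\<in>A. nu v - mu v) * h (Min A) \<le> (\<Sum>v\<in>A. (nu v - mu v) * h v)"
      using insert.IH[OF False mono tl] .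
    have MinA: "Min A \<in> A" using False insert.hyps(1) by simp
    have "{v\<in>A. Min A \<le> v} = A" using insert.hyps(1) by auto
    then have DA: "(\<Sum>v\<in>A. nu v - mu v) \<le> 0" using tl MinA by force
    have hb: "h (Min A) \<le> h b" using insert.prems(2) MinA insert.hyps(2) by force
    have Minb: "Min (insert b A) = b"
      using insert.hyps False by (simp add: min_def) (meson Min_in less_le_not_le)
    have "(\<Sum>v\<in>insert b A. nu v - mu v) * h (Min (insert b A))
        = (nu b - mu b) * h b + (\<Sum>v\<in>A. nu v - mu v) * h b"
      using insert.hyps(1) bA Minb by (simp add: algebra_simps)
    also have "\<dots> \<le> (nu b - mu b) * h b + (\<Sum>v\<in>A. nu v - mu v) * h (Min A)"
      using DA hb by (simp add: mult_left_mono_neg)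
    also have "\<dots> \<le> (nu b - mu b) * h b + (\<Sum>v\<in>A. (nu v - mu v) * h v)"
      using IH by simp
    also have "\<dots> = (\<Sum>v\<in>insert b A. (nu v - mu v) * h v)"
      using insert.hyps(1) bA by simp
    finally show ?thesis .
  qed
qed

lemma cmp:
  fixes h mu nu :: "real \<Rightarrow> real"
  assumes "finite V"
    and "\<forall>s\<in>V. \<forall>t\<in>V. s \<le> t \<longrightarrow> h t \<le> h s"
    and "\<forall>t. (\<Sum>v\<in>{v\<in>V. t \<le> v}. nu v) \<le> (\<Sum>v\<in>{v\<in>V. t \<le> v}. mu v)"
    and "(\<Sum>v\<in>V. nu v) = (\<Sum>v\<in>V. mu v)"
  shows "(\<Sum>v\<in>V. mu v * h v) \<le> (\<Sum>v\<in>V. nu v * h v)"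
proof (cases "V = {}")
  case True
  then show ?thesis by simp
next
  case False
  have "\<forall>t\<in>V. (\<Sum>v\<in>{v\<in>V. t \<le> v}. nu v - mu v) \<le> 0"
    using assms(3) by (simp add: sum_subtractf)
  from cmp_gen[OF assms(1) False assms(2) this]
  have "(\<Sum>v\<in>V. nu v - mu v) * h (Min V) \<le> (\<Sum>v\<in>V. (nu v - mu v) * h v)" .
  then have "0 \<le> (\<Sum>v\<in>V. (nu v - mu v) * h v)" using assms(4) by (simp add: sum_subtractf)
  then show ?thesis by (simp add: left_diff_distrib sum_subtractf)
qed



definition At :: "('x \<Rightarrow> real) \<Rightarrow> real \<Rightarrow> real" where
  "At p t = (\<Sum>a\<in>supp p. if t \<le> p a then p a else 0)"
definition Ap :: "('x \<Rightarrow> real) \<Rightarrow> real \<Rightarrow> real" where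
  "Ap p t = (\<Sum>a\<in>supp p. if t < p a then p a else 0)"
definition Mt :: "('x \<Rightarrow> real) \<Rightarrow> ('y \<Rightarrow> real) \<Rightarrow> real \<Rightarrow> real" where
  "Mt p q t = min (At p t) (At q t)"
definition Mp :: "('x \<Rightarrow> real) \<Rightarrow> ('y \<Rightarrow> real) \<Rightarrow> real \<Rightarrow> real" where
  "Mp p q t = min (Ap p t) (Ap q t)"
definition jmp :: "('x \<Rightarrow> real) \<Rightarrow> ('y \<Rightarrow> real) \<Rightarrow> real \<Rightarrow> real" where
  "jmp p q v = Mt p q v - Mp p q v"
definition vals :: "('x \<Rightarrow> real) \<Rightarrow> real set" where
  "vals p = p ` supp p"
definition subdist :: "('x \<Rightarrow> real) \<Rightarrow> bool" where
  "subdist p \<longleftrightarrow> finite (supp p) \<and> (\<forall>x. 0 \<le> p x) \<and> sum p (supp p) \<le> 1"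

lemma At_empty:
  assumes "\<forall>a\<in>supp p. \<not> t \<le> p a" shows "At p t = 0"
  unfolding At_def using assms by (intro sum.neutral) auto

lemma Ap_empty:
  assumes "\<forall>a\<in>supp p. \<not> t < p a" shows "Ap p t = 0"
  unfolding Ap_def using assms by (intro sum.neutral) auto

lemma At_eq:
  assumes "\<forall>a\<in>supp p. (t \<le> p a \<longleftrightarrow> s \<le> p a)" shows "At p t = At p s"
  unfolding At_def using assms by (intro sum.cong) auto

lemma At_Ap_eq:
  assumes "\<forall>a\<in>supp p. (t \<le> p a \<longleftrightarrow> s < p a)" shows "At p t = Ap p s"
  unfolding At_def Ap_def using assms by (intro sum.cong) auto

lemma tail_lemma:
  fixes p :: "'x \<Rightarrow> real" and q :: "'y \<Rightarrow> real"
  assumes W: "finite W" "vals p \<subseteq> W" "vals q \<subseteq> W"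
  shows "(\<Sum>v\<in>{v\<in>W. t \<le> v}. jmp p q v) = Mt p q t"
proof -
  have "\<And>t. card {v\<in>W. t \<le> v} = n \<Longrightarrow> (\<Sum>v\<in>{v\<in>W. t \<le> v}. jmp p q v) = Mt p q t" for n
  proof (induction n rule: less_induct)
    case (less n)
    fix t assume cn: "card {v\<in>W. t \<le> v} = n"
    define S where "S = {v\<in>W. t \<le> v}"
    have finS: "finite S" using W(1) S_def by simp
    show "(\<Sum>v\<in>{v\<in>W. t \<le> v}. jmp p q v) = Mt p q t"
    proof (cases "S = {}")
      case True
      have "\<forall>a\<in>supp p. \<not> t \<le> p a" using True W(2) unfolding S_def vals_def by auto
      moreover have "\<forall>a\<in>supp q. \<not> t \<le> q a" using True W(3) unfolding S_def vals_def by auto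
      moreover have "{v\<in>W. t \<le> v} = {}" using True S_def by simp
      ultimately show ?thesis unfolding Mt_def by (simp only: At_empty sum.empty)
    next
      case False
      define v0 where "v0 = Min S"
      have v0S: "v0 \<in> S" using False finS v0_def by simp
      have v0le: "\<forall>v\<in>S. v0 \<le> v" using finS v0_def by simp
      have tv0: "t \<le> v0" using v0S S_def by simp
      have eqp: "At p t = At p v0"
        by (rule At_eq) (use W(2) v0le tv0 in \<open>auto simp: S_def vals_def\<close>)
      have eqq: "At q t = At q v0"
        by (rule At_eq) (use W(3) v0le tv0 in \<open>auto simp: S_def vals_def\<close>)
      define R where "R = {v\<in>W. v0 < v}"
      have SR: "S = insert v0 R" "v0 \<notin> R"
        using v0S v0le tv0 unfolding S_def R_def by auto
      have finR: "finite R" using W(1) R_def by simp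
      have sumR: "(\<Sum>v\<in>R. jmp p q v) = Mp p q v0"
      proof (cases "R = {}")
        case True
        have "\<forall>a\<in>supp p. \<not> v0 < p a" using True W(2) unfolding R_def vals_def by auto
        moreover have "\<forall>a\<in>supp q. \<not> v0 < q a" using True W(3) unfolding R_def vals_def by auto
        ultimately show ?thesis using True unfolding Mp_def by (simp add: Ap_empty)
      next
        case False
        define v1 where "v1 = Min R"
        have v1R: "v1 \<in> R" using False finR v1_def by simp
        have v1le: "\<forall>v\<in>R. v1 \<le> v" using finR v1_def by simp
        have R1: "{v\<in>W. v1 \<le> v} = R" using v1R v1le unfolding R_def by auto
        have "card R < card S" using SR finR by simp
        then have "card R < n" using cn S_def by simp
        from less.IH[OF this, of v1] R1
        have "(\<Sum>v\<in>R. jmp p q v) = Mt p q v1" by simp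
        moreover have "At p v1 = Ap p v0"
          by (rule At_Ap_eq) (use W(2) v1le v1R in \<open>auto simp: R_def vals_def\<close>)
        moreover have "At q v1 = Ap q v0"
          by (rule At_Ap_eq) (use W(3) v1le v1R in \<open>auto simp: R_def vals_def\<close>)
        ultimately show ?thesis by (simp add: Mt_def Mp_def)
      qed
      have "(\<Sum>v\<in>{v\<in>W. t \<le> v}. jmp p q v) = jmp p q v0 + (\<Sum>v\<in>R. jmp p q v)"
        using SR finR S_def by simp
      also have "\<dots> = Mt p q v0" using sumR by (simp add: jmp_def)
      also have "\<dots> = Mt p q t" using eqp eqq by (simp add: Mt_def)
      finally show ?thesis .
    qed
  qed
  then show ?thesis by blast
qed

lemma jmp_zero:
  assumes "v \<notin> vals p" "v \<notin> vals q"
  shows "jmp p q v = 0"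
proof -
  have "At p v = Ap p v" unfolding At_def Ap_def using assms(1)
    by (intro sum.cong) (auto simp: vals_def)
  moreover have "At q v = Ap q v" unfolding At_def Ap_def using assms(2)
    by (intro sum.cong) (auto simp: vals_def)
  ultimately show ?thesis by (simp add: jmp_def Mt_def Mp_def)
qed

lemma At_super:
  assumes "finite S" "supp p \<subseteq> S"
  shows "At p t = (\<Sum>a\<in>S. if t \<le> p a then p a else 0)"
  unfolding At_def using assms
  by (intro sum.mono_neutral_left) (auto simp: supp_def)

lemma Ap_super:
  assumes "finite S" "supp p \<subseteq> S"
  shows "Ap p t = (\<Sum>a\<in>S. if t < p a then p a else 0)"
  unfolding Ap_def using assms
  by (intro sum.mono_neutral_left) (auto simp: supp_def)

lemma At_upd:
  assumes "finite (supp p)"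
  shows "At (p(a := w)) t = At p t - (if t \<le> p a then p a else 0) + (if t \<le> w then w else 0)"
proof -
  have f: "finite (insert a (supp p))" using assms by simp
  have s1: "supp (p(a := w)) \<subseteq> insert a (supp p)" by (auto simp: supp_def)
  have s2: "supp p \<subseteq> insert a (supp p)" by auto
  have "At (p(a := w)) t = (\<Sum>x\<in>insert a (supp p). if t \<le> (p(a := w)) x then (p(a := w)) x else 0)"
    by (rule At_super[OF f s1])
  also have "\<dots> = (if t \<le> w then w else 0) + (\<Sum>x\<in>insert a (supp p) - {a}. if t \<le> p x then p x else 0)"
    using f by (simp add: sum.remove[OF f, of a]) (intro sum.cong, auto)
  also have "\<dots> = (if t \<le> w then w else 0) + ((\<Sum>x\<in>insert a (supp p). if t \<le> p x then p x else 0) - (if t \<le> p a then p a else 0))"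
    using f by (simp only: sum_diff1 if_True insert_iff simp_thms)
  also have "\<dots> = At p t - (if t \<le> p a then p a else 0) + (if t \<le> w then w else 0)"
    using At_super[OF f s2] by simp
  finally show ?thesis .
qed

lemma At_nonneg: "\<forall>x. 0 \<le> p x \<Longrightarrow> 0 \<le> At p t"
  unfolding At_def by (intro sum_nonneg) auto

lemma At_big: "\<forall>x. p x \<le> m \<Longrightarrow> m < t \<Longrightarrow> At p t = 0"
  unfolding At_def by (intro sum.neutral) (smt (verit))

lemma At_small: "\<forall>x. 0 \<le> p x \<Longrightarrow> t \<le> 0 \<Longrightarrow> At p t = sum p (supp p)"
  unfolding At_def by (intro sum.cong) (auto intro: order_trans)

lemma jmp_nonneg: "\<forall>x. 0 \<le> p x \<Longrightarrow> \<forall>x. 0 \<le> q x \<Longrightarrow> 0 \<le> jmp p q v"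
proof -
  assume a: "\<forall>x. 0 \<le> p x" "\<forall>x. 0 \<le> q x"
  have "Ap p v \<le> At p v" unfolding At_def Ap_def using a by (intro sum_mono) auto
  moreover have "Ap q v \<le> At q v" unfolding At_def Ap_def using a by (intro sum_mono) auto
  ultimately show ?thesis by (simp add: jmp_def Mt_def Mp_def min_def)
qed



definition Psi :: "(real \<Rightarrow> real) \<Rightarrow> ('x \<Rightarrow> real) \<Rightarrow> ('y \<Rightarrow> real) \<Rightarrow> real" where
  "Psi f p q = (\<Sum>v\<in>vals p \<union> vals q. jmp p q v * (f v / v))"

lemma Psi_sym: "Psi f p q = Psi f q p"
  unfolding Psi_def jmp_def Mt_def Mp_def by (simp add: Un_commute min.commute)

lemma jmp_sym: "jmp p q v = jmp q p v"
  unfolding jmp_def Mt_def Mp_def by (simp add: min.commute)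

lemma subdist_fin: "subdist p \<Longrightarrow> finite (vals p)"
  unfolding subdist_def vals_def by simp

lemma subdist_vals: assumes "subdist p" "v \<in> vals p" shows "0 < v" "v \<le> 1"
proof -
  from assms obtain a where a: "a \<in> supp p" "v = p a" unfolding vals_def by auto
  have nn: "\<forall>x. 0 \<le> p x" "finite (supp p)" "sum p (supp p) \<le> 1" using assms(1) unfolding subdist_def by blast+
  show "0 < v" using a nn by (auto simp: supp_def less_le)
  have "p a \<le> sum p (supp p)" using nn a by (intro member_le_sum) auto
  then show "v \<le> 1" using a nn by simp
qed

lemma Psi_grid:
  assumes "finite V" "vals p \<union> vals q \<subseteq> V"
  shows "Psi f p q = (\<Sum>v\<in>V. jmp p q v * (f v / v))"
  unfolding Psi_def using assms
  by (intro sum.mono_neutral_left) (auto simp: jmp_zero)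

lemma subdist_upd:
  assumes "subdist p" "0 \<le> d" "d \<le> p a"
  shows "subdist (p(a := p a - d))"
proof -
  have nn: "\<forall>x. 0 \<le> p x" "finite (supp p)" "sum p (supp p) \<le> 1" using assms(1) unfolding subdist_def by blast+
  have s: "supp (p(a := p a - d)) \<subseteq> supp p" using assms by (auto simp: supp_def)
  have "sum (p(a := p a - d)) (supp (p(a := p a - d))) = sum (p(a := p a - d)) (supp p)"
    using s nn by (intro sum.mono_neutral_left) (auto simp: supp_def)
  also have "\<dots> \<le> sum p (supp p)" using assms by (intro sum_mono) auto
  finally show ?thesis using nn s assms unfolding subdist_def by (auto intro: finite_subset)
qed

locale costf =
  fixes f :: "real \<Rightarrow> real" and r :: real
  assumes conc: "concave_on {0..1} f"
    and nonneg: "\<forall>x\<in>{0..1}. 0 \<le> f x"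
    and f0: "f 0 = 0"
    and fpos: "\<forall>x. 0 < x \<and> x \<le> 1 \<longrightarrow> 0 < f x"
    and r_nonneg: "0 \<le> r"
    and r_ineq: "\<And>z x. 0 < z \<Longrightarrow> z < x \<Longrightarrow> x \<le> 1 \<Longrightarrow> f z - z / x * f x \<le> r * f x"
begin

lemma h_mono:
  assumes "0 < s" "s \<le> t" "t \<le> 1"
  shows "f t / t \<le> f s / s"
proof -
  have c: "\<forall>x\<in>{0..1}. \<forall>y\<in>{0..1}. \<forall>u\<ge>0. \<forall>v\<ge>0. u + v = 1 \<longrightarrow> f (u *\<^sub>R x + v *\<^sub>R y) \<ge> u * f x + v * f y"
    using conc concave_on_iff by blast
  have t0: "0 < t" using assms by simp
  have "f ((s/t) *\<^sub>R t + (1 - s/t) *\<^sub>R 0) \<ge> (s/t) * f t + (1 - s/t) * f 0"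
    using assms t0 by (intro c[rule_format]) auto
  then have "f s \<ge> (s/t) * f t" using t0 f0 by (simp add: field_simps)
  then show ?thesis using assms t0 by (simp add: field_simps)
qed

lemma Psi_nonneg:
  assumes "subdist p" "subdist q" shows "0 \<le> Psi f p q"
  unfolding Psi_def
proof (intro sum_nonneg mult_nonneg_nonneg)
  fix v assume v: "v \<in> vals p \<union> vals q"
  show "0 \<le> jmp p q v" using assms by (intro jmp_nonneg) (auto simp: subdist_def)
  have "0 < v \<and> v \<le> 1" using v subdist_vals[OF assms(1)] subdist_vals[OF assms(2)] by auto
  then show "0 \<le> f v / v" using nonneg by auto
qed

end



lemma sum_delta_tail:
  fixes V :: "real set"
  assumes "finite V" "x \<in> V"
  shows "(\<Sum>v\<in>{v\<in>V. t \<le> v}. if v = x then c else 0) = (if t \<le> x then c else 0)"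
  using assms by (simp add: sum.delta)

context costf begin

lemma step_main:
  fixes p :: "'x \<Rightarrow> real" and q :: "'y \<Rightarrow> real"
  assumes sp: "subdist p" and sq: "subdist q"
    and pa: "\<forall>a'. p a' \<le> p a" and qb: "\<forall>b'. q b' \<le> q b"
    and xpos: "0 < p a" and le: "p a \<le> q b"
  shows "(1 - r) * f (p a) + Psi f (p(a := 0)) (q(b := q b - p a)) \<le> Psi f p q"
proof -
  define x where "x = p a"
  define y where "y = q b"
  define z where "z = y - x"
  define p' where "p' = p(a := 0)"
  define q' where "q' = q(b := z)"
  have nnp: "\<forall>v. 0 \<le> p v" "finite (supp p)" using sp unfolding subdist_def by blast+
  have nnq: "\<forall>v. 0 \<le> q v" "finite (supp q)" using sq unfolding subdist_def by blast+
  have x0: "0 < x" using xpos x_def by simp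
  have z0: "0 \<le> z" using le x_def y_def z_def by simp
  have aS: "a \<in> supp p" using x0 x_def by (simp add: supp_def)
  have bS: "b \<in> supp q" using x0 le x_def y_def by (simp add: supp_def)
  have xV: "x \<in> vals p" using aS x_def vals_def by auto
  have yV: "y \<in> vals q" using bS y_def vals_def by auto
  have x1: "x \<le> 1" using xV sp subdist_vals by blast
  have y1: "y \<le> 1" using yV sq subdist_vals by blast
  have z1: "z \<le> 1" using z_def x0 y1 by simp
  have sp': "subdist p'" using subdist_upd[OF sp, of "p a" a] xpos p'_def by simp
  have sq': "subdist q'" using subdist_upd[OF sq, of "p a" b] xpos le q'_def z_def x_def y_def by simp
  have nnq': "\<forall>v. 0 \<le> q' v" using sq' unfolding subdist_def by blast
  have Atp': "At p' t = At p t - (if t \<le> x then x else 0)" for t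
    unfolding p'_def using At_upd[OF nnp(2), of a 0 t] x_def by simp
  have Atq': "At q' t = At q t - (if t \<le> y then y else 0) + (if t \<le> z then z else 0)" for t
    unfolding q'_def using At_upd[OF nnq(2), of b z t] y_def by simp
  have Atbig: "At p t = 0" if "x < t" for t
    using At_big[of p x t] pa that x_def by simp
  have Atq0: "0 \<le> At q t" for t using At_nonneg nnq(1) by blast
  have Atq'0: "0 \<le> At q' t" for t using At_nonneg nnq' by blast
  define V where "V = vals p \<union> vals q \<union> (if 0 < z then {z} else {})"
  have finV: "finite V" using V_def subdist_fin[OF sp] subdist_fin[OF sq] by auto
  have valsp': "vals p' \<subseteq> vals p" unfolding p'_def vals_def supp_def by auto
  have valsq': "vals q' \<subseteq> vals q \<union> (if 0 < z then {z} else {})"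
    unfolding q'_def vals_def supp_def using z0 by auto
  have V1: "vals p \<union> vals q \<subseteq> V" using V_def by auto
  have V2: "vals p' \<union> vals q' \<subseteq> V" using V_def valsp' valsq' by auto
  have Vpos: "\<forall>v\<in>V. 0 < v \<and> v \<le> 1"
    using subdist_vals[OF sp] subdist_vals[OF sq] z1 unfolding V_def by auto
  have hmono: "\<forall>s\<in>V. \<forall>t\<in>V. s \<le> t \<longrightarrow> f t / t \<le> f s / s"
    using Vpos h_mono by blast
  have xinV: "x \<in> V" using V_def xV by auto
  have Psi1: "Psi f p q = (\<Sum>v\<in>V. jmp p q v * (f v / v))" using Psi_grid[OF finV V1] .
  have Psi2: "Psi f p' q' = (\<Sum>v\<in>V. jmp p' q' v * (f v / v))" using Psi_grid[OF finV V2] .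
  have tail1: "(\<Sum>v\<in>{v\<in>V. t \<le> v}. jmp p q v) = Mt p q t" for t
    using tail_lemma[OF finV] V1 by blast
  have tail2: "(\<Sum>v\<in>{v\<in>V. t \<le> v}. jmp p' q' v) = Mt p' q' t" for t
    using tail_lemma[OF finV] V2 by blast
  have V0: "{v\<in>V. 0 \<le> v} = V" using Vpos by auto
  have fx: "x * (f x / x) = f x" using x0 by simp
  have main: "Psi f p' q' \<le> Psi f p q - f x + r * f x"
  proof (cases "0 < z \<and> z < x")
    case True
    have zinV: "z \<in> V" using V_def True by auto
    have zx: "z \<noteq> x" using True by simp
    define nu where "nu v = jmp p q v - (if v = x then x + z else 0) + (if v = z then z else 0)" for v
    have tnu: "(\<Sum>v\<in>{v\<in>V. t \<le> v}. nu v) = Mt p q t - (if t \<le> x then x + z else 0) + (if t \<le> z then z else 0)" for t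
      unfolding nu_def sum.distrib sum_subtractf tail1 sum_delta_tail[OF finV xinV] sum_delta_tail[OF finV zinV]
      by simp
    have tle: "(\<Sum>v\<in>{v\<in>V. t \<le> v}. nu v) \<le> (\<Sum>v\<in>{v\<in>V. t \<le> v}. jmp p' q' v)" for t
    proof -
      have "Mt p q t - (if t \<le> x then x + z else 0) + (if t \<le> z then z else 0) \<le> Mt p' q' t"
      proof (cases "t \<le> z")
        case True
        then show ?thesis using Atp' Atq' \<open>0 < z \<and> z < x\<close> z_def unfolding Mt_def by (auto simp: min_def)
      next
        case False
        show ?thesis
        proof (cases "t \<le> x")
          case True
          then show ?thesis using Atp' Atq' False z_def le x_def y_def unfolding Mt_def by (auto simp: min_def)
        next
          case False2: False
          then show ?thesis using Atp' Atbig Atq0 Atq'0 False unfolding Mt_def by (auto simp: min_def)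
        qed
      qed
      then show ?thesis using tnu tail2 by simp
    qed
    have teq: "(\<Sum>v\<in>V. nu v) = (\<Sum>v\<in>V. jmp p' q' v)"
    proof -
      have "Mt p q 0 - (if 0 \<le> x then x + z else 0) + (if 0 \<le> z then z else 0) = Mt p' q' 0"
        using Atp' Atq' True z_def x0 le x_def y_def unfolding Mt_def by (auto simp: min_def)
      then show ?thesis using tnu[of 0] tail2[of 0] V0 by simp
    qed
    have "(\<Sum>v\<in>V. jmp p' q' v * (f v / v)) \<le> (\<Sum>v\<in>V. nu v * (f v / v))"
      by (rule cmp[OF finV hmono]) (use tle teq in auto)
    also have "\<dots> = (\<Sum>v\<in>V. jmp p q v * (f v / v)) - (x + z) * (f x / x) + z * (f z / z)"
    proof -
      have "(\<Sum>v\<in>V. nu v * (f v / v)) = (\<Sum>v\<in>V. jmp p q v * (f v / v) - (if v = x then (x + z) * (f x / x) else 0) + (if v = z then z * (f z / z) else 0))"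
        unfolding nu_def by (intro sum.cong) (auto simp: algebra_simps)
      also have "\<dots> = (\<Sum>v\<in>V. jmp p q v * (f v / v)) - (\<Sum>v\<in>V. if v = x then (x + z) * (f x / x) else 0) + (\<Sum>v\<in>V. if v = z then z * (f z / z) else 0)"
        by (simp only: sum.distrib sum_subtractf)
      also have "\<dots> = (\<Sum>v\<in>V. jmp p q v * (f v / v)) - (x + z) * (f x / x) + z * (f z / z)"
        using finV xinV zinV by (simp only: sum.delta if_True)
      finally show ?thesis .
    qed
    also have "\<dots> = Psi f p q - f x - (z / x * f x - f z)"
      using Psi1 x0 True by (simp add: field_simps)
    finally have "Psi f p' q' \<le> Psi f p q - f x - (z / x * f x - f z)" using Psi2 by simp
    moreover have "f z - z / x * f x \<le> r * f x" using r_ineq True x1 by blast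
    ultimately show ?thesis by simp
  next
    case False
    define nu where "nu v = jmp p q v - (if v = x then x else 0)" for v
    have tnu: "(\<Sum>v\<in>{v\<in>V. t \<le> v}. nu v) = Mt p q t - (if t \<le> x then x else 0)" for t
      unfolding nu_def sum_subtractf tail1 sum_delta_tail[OF finV xinV]
      by simp
    have tle: "(\<Sum>v\<in>{v\<in>V. t \<le> v}. nu v) \<le> (\<Sum>v\<in>{v\<in>V. t \<le> v}. jmp p' q' v)"
      and teq0: "t \<le> x \<Longrightarrow> (\<Sum>v\<in>{v\<in>V. t \<le> v}. nu v) = (\<Sum>v\<in>{v\<in>V. t \<le> v}. jmp p' q' v)" for t
    proof -
      have zc: "z = 0 \<or> x \<le> z" using False z0 by auto
      have e: "Mt p q t - (if t \<le> x then x else 0) = Mt p' q' t" if "t \<le> x"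
        using that zc Atp' Atq' z_def le x_def y_def unfolding Mt_def by (auto simp: min_def)
      have "Mt p q t - (if t \<le> x then x else 0) \<le> Mt p' q' t"
      proof (cases "t \<le> x")
        case True then show ?thesis using e by simp
      next
        case False
        then show ?thesis using Atp' Atbig Atq0 Atq'0 unfolding Mt_def by (auto simp: min_def)
      qed
      then show "(\<Sum>v\<in>{v\<in>V. t \<le> v}. nu v) \<le> (\<Sum>v\<in>{v\<in>V. t \<le> v}. jmp p' q' v)"
        using tnu tail2 by simp
      show "t \<le> x \<Longrightarrow> (\<Sum>v\<in>{v\<in>V. t \<le> v}. nu v) = (\<Sum>v\<in>{v\<in>V. t \<le> v}. jmp p' q' v)"
        using e tnu tail2 by simp
    qed
    have teq: "(\<Sum>v\<in>V. nu v) = (\<Sum>v\<in>V. jmp p' q' v)"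
      using teq0[of 0] x0 V0 by simp
    have "(\<Sum>v\<in>V. jmp p' q' v * (f v / v)) \<le> (\<Sum>v\<in>V. nu v * (f v / v))"
      by (rule cmp[OF finV hmono]) (use tle teq in auto)
    also have "\<dots> = (\<Sum>v\<in>V. jmp p q v * (f v / v)) - x * (f x / x)"
    proof -
      have "(\<Sum>v\<in>V. nu v * (f v / v)) = (\<Sum>v\<in>V. jmp p q v * (f v / v) - (if v = x then x * (f x / x) else 0))"
        unfolding nu_def by (intro sum.cong) (auto simp: algebra_simps)
      also have "\<dots> = (\<Sum>v\<in>V. jmp p q v * (f v / v)) - (\<Sum>v\<in>V. if v = x then x * (f x / x) else 0)"
        by (simp only: sum_subtractf)
      also have "\<dots> = (\<Sum>v\<in>V. jmp p q v * (f v / v)) - x * (f x / x)"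
        using finV xinV by (simp only: sum.delta if_True)
      finally show ?thesis .
    qed
    also have "\<dots> = Psi f p q - f x" using Psi1 fx by simp
    finally have "Psi f p' q' \<le> Psi f p q - f x" using Psi2 by simp
    moreover have "0 \<le> r * f x" using r_nonneg fpos x0 x1 by (meson less_imp_le mult_nonneg_nonneg)
    ultimately show ?thesis by simp
  qed
  have "q(b := q b - p a) = q'" using q'_def z_def x_def y_def by simp
  then show ?thesis using main p'_def x_def by (simp add: algebra_simps)
qed

end


lemma dist_subdist: "is_dist p \<Longrightarrow> subdist p"
  unfolding is_dist_def subdist_def by simp

lemma maxmass_ge:
  assumes "finite (supp p)" shows "p a' \<le> maxmass p" "0 \<le> maxmass p"
proof -
  have fin: "finite (insert 0 (p ` supp p))" using assms by simp
  show "0 \<le> maxmass p" unfolding maxmass_def using fin by simp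
  show "p a' \<le> maxmass p"
  proof (cases "a' \<in> supp p")
    case True
    then show ?thesis unfolding maxmass_def using fin by simp
  next
    case False
    then have "p a' = 0" by (simp add: supp_def)
    then show ?thesis using \<open>0 \<le> maxmass p\<close> by simp
  qed
qed

context costf begin

lemma greedy_bound:
  "greedy_run p q G \<Longrightarrow> subdist p \<Longrightarrow> subdist q \<Longrightarrow> (1 - r) * sum_list (map f G) \<le> Psi f p q"
proof (induction rule: greedy_run.induct)
  case (stop p q)
  then show ?case using Psi_nonneg by simp
next
  case (step r' p q a b G)
  have fp: "finite (supp p)" using step.prems subdist_def by blast
  have fq: "finite (supp q)" using step.prems subdist_def by blast
  have pa: "\<forall>a'. p a' \<le> p a" using maxmass_ge[OF fp] step.hyps(3) by simp
  have qb: "\<forall>b'. q b' \<le> q b" using maxmass_ge[OF fq] step.hyps(4) by simp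
  have r'0: "0 < r'" using step.hyps(1,2) maxmass_ge(2)[OF fp] maxmass_ge(2)[OF fq]
    by (simp add: min_def split: if_splits)
  have r'le: "r' \<le> p a" "r' \<le> q b" using step.hyps(1,3,4) by auto
  have sp': "subdist (p(a := p a - r'))" using subdist_upd[OF step.prems(1)] r'0 r'le by simp
  have sq': "subdist (q(b := q b - r'))" using subdist_upd[OF step.prems(2)] r'0 r'le by simp
  have IH: "(1 - r) * sum_list (map f G) \<le> Psi f (p(a := p a - r')) (q(b := q b - r'))"
    using step.IH[OF sp' sq'] .
  show ?case
  proof (cases "p a \<le> q b")
    case True
    then have rr: "r' = p a" using step.hyps(1,3,4) by simp
    have "(1 - r) * f (p a) + Psi f (p(a := 0)) (q(b := q b - p a)) \<le> Psi f p q"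
      using step_main[OF step.prems pa qb] r'0 rr True by simp
    then show ?thesis using IH rr by (simp add: algebra_simps)
  next
    case False
    then have rr: "r' = q b" using step.hyps(1,3,4) by simp
    have "(1 - r) * f (q b) + Psi f (q(b := 0)) (p(a := p a - q b)) \<le> Psi f q p"
      using step_main[OF step.prems(2) step.prems(1) qb pa] r'0 rr False by simp
    then show ?thesis using IH rr Psi_sym[of f p q] Psi_sym[of f "p(a := p a - q b)" "q(b := 0)"]
      by (simp add: algebra_simps)
  qed
qed

end


context costf begin

lemma lower_bound:
  fixes p :: "'x \<Rightarrow> real" and q :: "'y \<Rightarrow> real" and C :: "'x \<times> 'y \<Rightarrow> real"
  assumes p: "is_dist p" and q: "is_dist q" and C: "is_coupling C p q"
  shows "Psi f p q \<le> F_cost f C"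
proof -
  define K where "K = supp C"
  have Cd: "is_dist C" and rowm: "\<forall>a. (\<Sum>b\<in>{b. C (a, b) \<noteq> 0}. C (a, b)) = p a"
    and colm: "\<forall>b. (\<Sum>a\<in>{a. C (a, b) \<noteq> 0}. C (a, b)) = q b"
    using C unfolding is_coupling_def by blast+
  have finK: "finite K" and Cnn: "\<forall>c. 0 \<le> C c" and CK1: "sum C K = 1"
    using Cd unfolding is_dist_def K_def by blast+
  have Cpos: "0 < C c" if "c \<in> K" for c using that Cnn[rule_format, of c] K_def by (auto simp: supp_def less_le)
  have sp: "subdist p" and sq: "subdist q" using p q dist_subdist by blast+
  have pnn: "\<forall>v. 0 \<le> p v" and qnn: "\<forall>v. 0 \<le> q v" using p q unfolding is_dist_def by blast+
  have p1: "sum p (supp p) = 1" and q1: "sum q (supp q) = 1" using p q unfolding is_dist_def by blast+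
  have rowset: "{c\<in>K. fst c = a} = Pair a ` {b. C (a, b) \<noteq> 0}" for a
    unfolding K_def supp_def by auto
  have colset: "{c\<in>K. snd c = b} = (\<lambda>a. (a, b)) ` {a. C (a, b) \<noteq> 0}" for b
    unfolding K_def supp_def by auto
  have finrow: "finite {b. C (a, b) \<noteq> 0}" for a
  proof -
    have "{b. C (a, b) \<noteq> 0} \<subseteq> snd ` K" unfolding K_def supp_def by force
    then show ?thesis using finK finite_subset by blast
  qed
  have fincol: "finite {a. C (a, b) \<noteq> 0}" for b
  proof -
    have "{a. C (a, b) \<noteq> 0} \<subseteq> fst ` K" unfolding K_def supp_def by force
    then show ?thesis using finK finite_subset by blast
  qed
  have rowsum: "(\<Sum>c\<in>{c\<in>K. fst c = a}. C c) = p a" for a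
    unfolding rowset using rowm by (subst sum.reindex) (auto simp: inj_on_def)
  have colsum: "(\<Sum>c\<in>{c\<in>K. snd c = b}. C c) = q b" for b
    unfolding colset using colm by (subst sum.reindex) (auto simp: inj_on_def)
  have Cle_p: "C c \<le> p (fst c)" if "c \<in> K" for c
  proof -
    have "C c \<le> (\<Sum>d\<in>{d\<in>K. fst d = fst c}. C d)"
      using that finK Cnn by (intro member_le_sum) auto
    then show ?thesis unfolding rowsum .
  qed
  have Cle_q: "C c \<le> q (snd c)" if "c \<in> K" for c
  proof -
    have "C c \<le> (\<Sum>d\<in>{d\<in>K. snd d = snd c}. C d)"
      using that finK Cnn by (intro member_le_sum) auto
    then show ?thesis unfolding colsum .
  qed
  have fstK: "fst c \<in> supp p" if "c \<in> K" for c
    using Cle_p[OF that] Cpos[OF that] by (auto simp: supp_def)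
  have sndK: "snd c \<in> supp q" if "c \<in> K" for c
    using Cle_q[OF that] Cpos[OF that] by (auto simp: supp_def)
  have finp: "finite (supp p)" and finq: "finite (supp q)" using sp sq unfolding subdist_def by blast+
  define W where "W = vals p \<union> vals q"
  have finW: "finite W" using W_def subdist_fin[OF sp] subdist_fin[OF sq] by simp
  have Wpos: "\<forall>v\<in>W. 0 < v \<and> v \<le> 1"
    using subdist_vals[OF sp] subdist_vals[OF sq] unfolding W_def by auto
  define kap where "kap c = min (p (fst c)) (q (snd c))" for c
  have kapW: "kap c \<in> W" if "c \<in> K" for c
  proof -
    have "fst c \<in> supp p" using Cle_p[OF that] Cpos[OF that] by (auto simp: supp_def)
    moreover have "snd c \<in> supp q" using Cle_q[OF that] Cpos[OF that] by (auto simp: supp_def)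
    ultimately show ?thesis unfolding kap_def W_def vals_def min_def by auto
  qed
  define mu where "mu v = (\<Sum>c\<in>{c\<in>K. kap c = v}. C c)" for v
  have step1: "(\<Sum>c\<in>K. C c * (f (kap c) / kap c)) \<le> F_cost f C"
    unfolding F_cost_def K_def[symmetric]
  proof (rule sum_mono)
    fix c assume cK: "c \<in> K"
    have k1: "C c \<le> kap c" "kap c \<le> 1" using Cle_p[OF cK] Cle_q[OF cK] kapW[OF cK] Wpos
      unfolding kap_def by auto
    have "f (kap c) / kap c \<le> f (C c) / C c" using h_mono Cpos[OF cK] k1 by blast
    then have "C c * (f (kap c) / kap c) \<le> C c * (f (C c) / C c)"
      using Cpos[OF cK] by (intro mult_left_mono) auto
    then show "C c * (f (kap c) / kap c) \<le> f (C c)" using Cpos[OF cK] by simp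
  qed
  have step2: "(\<Sum>c\<in>K. C c * (f (kap c) / kap c)) = (\<Sum>v\<in>W. mu v * (f v / v))"
  proof -
    have "(\<Sum>v\<in>W. mu v * (f v / v)) = (\<Sum>v\<in>W. \<Sum>c\<in>{c\<in>K. kap c = v}. C c * (f (kap c) / kap c))"
      unfolding mu_def sum_distrib_right by (intro sum.cong refl) auto
    also have "\<dots> = (\<Sum>c\<in>K. C c * (f (kap c) / kap c))"
      by (rule sum.group[OF finK finW]) (use kapW in auto)
    finally show ?thesis by simp
  qed
  have Atp: "(\<Sum>c\<in>{c\<in>K. t \<le> p (fst c)}. C c) = At p t" for t
  proof -
    have "(\<Sum>c\<in>{c\<in>K. t \<le> p (fst c)}. C c) = (\<Sum>a\<in>supp p. \<Sum>c\<in>{c\<in>{c\<in>K. t \<le> p (fst c)}. fst c = a}. C c)"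
      using finK finp by (intro sum.group[symmetric]) (auto dest: fstK)
    also have "\<dots> = (\<Sum>a\<in>supp p. if t \<le> p a then p a else 0)"
    proof (intro sum.cong refl)
      fix a assume "a \<in> supp p"
      show "(\<Sum>c\<in>{c\<in>{c\<in>K. t \<le> p (fst c)}. fst c = a}. C c) = (if t \<le> p a then p a else 0)"
      proof (cases "t \<le> p a")
        case True
        then have e: "{c\<in>{c\<in>K. t \<le> p (fst c)}. fst c = a} = {c\<in>K. fst c = a}" by auto
        show ?thesis unfolding e using True rowsum by simp
      next
        case False
        then have e: "{c\<in>{c\<in>K. t \<le> p (fst c)}. fst c = a} = {}" by auto
        show ?thesis unfolding e using False by simp
      qed
    qed
    finally show ?thesis unfolding At_def .
  qed
  have Atq: "(\<Sum>c\<in>{c\<in>K. t \<le> q (snd c)}. C c) = At q t" for t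
  proof -
    have "(\<Sum>c\<in>{c\<in>K. t \<le> q (snd c)}. C c) = (\<Sum>b\<in>supp q. \<Sum>c\<in>{c\<in>{c\<in>K. t \<le> q (snd c)}. snd c = b}. C c)"
      using finK finq by (intro sum.group[symmetric]) (auto dest: sndK)
    also have "\<dots> = (\<Sum>b\<in>supp q. if t \<le> q b then q b else 0)"
    proof (intro sum.cong refl)
      fix b assume "b \<in> supp q"
      show "(\<Sum>c\<in>{c\<in>{c\<in>K. t \<le> q (snd c)}. snd c = b}. C c) = (if t \<le> q b then q b else 0)"
      proof (cases "t \<le> q b")
        case True
        then have e: "{c\<in>{c\<in>K. t \<le> q (snd c)}. snd c = b} = {c\<in>K. snd c = b}" by auto
        show ?thesis unfolding e using True colsum by simp
      next
        case False
        then have e: "{c\<in>{c\<in>K. t \<le> q (snd c)}. snd c = b} = {}" by auto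
        show ?thesis unfolding e using False by simp
      qed
    qed
    finally show ?thesis unfolding At_def .
  qed
  have tailmu: "(\<Sum>v\<in>{v\<in>W. t \<le> v}. mu v) = (\<Sum>c\<in>{c\<in>K. t \<le> kap c}. C c)" for t
  proof -
    have "(\<Sum>v\<in>{v\<in>W. t \<le> v}. mu v) = (\<Sum>v\<in>{v\<in>W. t \<le> v}. \<Sum>c\<in>{c\<in>{c\<in>K. t \<le> kap c}. kap c = v}. C c)"
      unfolding mu_def by (intro sum.cong refl arg_cong[where f="sum C"]) auto
    also have "\<dots> = (\<Sum>c\<in>{c\<in>K. t \<le> kap c}. C c)"
      using finK finW kapW by (intro sum.group) auto
    finally show ?thesis .
  qed
  have tle: "(\<Sum>v\<in>{v\<in>W. t \<le> v}. mu v) \<le> (\<Sum>v\<in>{v\<in>W. t \<le> v}. jmp p q v)" for t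
  proof -
    have "(\<Sum>c\<in>{c\<in>K. t \<le> kap c}. C c) \<le> (\<Sum>c\<in>{c\<in>K. t \<le> p (fst c)}. C c)"
      using finK Cnn by (intro sum_mono2) (auto simp: kap_def)
    moreover have "(\<Sum>c\<in>{c\<in>K. t \<le> kap c}. C c) \<le> (\<Sum>c\<in>{c\<in>K. t \<le> q (snd c)}. C c)"
      using finK Cnn by (intro sum_mono2) (auto simp: kap_def)
    ultimately have "(\<Sum>c\<in>{c\<in>K. t \<le> kap c}. C c) \<le> Mt p q t"
      using Atp Atq unfolding Mt_def by simp
    moreover have "(\<Sum>v\<in>{v\<in>W. t \<le> v}. jmp p q v) = Mt p q t"
      using tail_lemma[OF finW, of p q t] W_def by blast
    ultimately show ?thesis using tailmu by simp
  qed
  have W0: "{v\<in>W. 0 \<le> v} = W" using Wpos by auto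
  have teq: "(\<Sum>v\<in>W. mu v) = (\<Sum>v\<in>W. jmp p q v)"
  proof -
    have "(\<Sum>v\<in>W. mu v) = (\<Sum>c\<in>{c\<in>K. 0 \<le> kap c}. C c)" using tailmu[of 0] W0 by simp
    also have "{c\<in>K. 0 \<le> kap c} = K" using kapW Wpos by force
    finally have "(\<Sum>v\<in>W. mu v) = 1" using CK1 by simp
    moreover have "(\<Sum>v\<in>W. jmp p q v) = Mt p q 0"
      using tail_lemma[OF finW, of p q 0] W0 W_def by simp
    moreover have "Mt p q 0 = 1" unfolding Mt_def using At_small[OF pnn] At_small[OF qnn] p1 q1 by simp
    ultimately show ?thesis by simp
  qed
  have Wmono: "\<forall>s\<in>W. \<forall>t\<in>W. s \<le> t \<longrightarrow> f t / t \<le> f s / s" using Wpos h_mono by blast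
  have "(\<Sum>v\<in>W. jmp p q v * (f v / v)) \<le> (\<Sum>v\<in>W. mu v * (f v / v))"
    by (rule cmp[OF finW Wmono]) (use tle teq in auto)
  then show ?thesis using step1 step2 unfolding Psi_def W_def by simp
qed

end


theorem theorem5:
  fixes f :: "real \<Rightarrow> real" and r :: real
    and p :: "'a \<Rightarrow> real" and q :: "'b \<Rightarrow> real"
    and C :: "'a \<times> 'b \<Rightarrow> real" and G :: "real list"
  assumes conc: "concave_on {0..1} f"
    and nonneg: "\<forall>x\<in>{0..1}. 0 \<le> f x"
    and f0: "f 0 = 0"
    and fpos: "\<forall>x. 0 < x \<and> x \<le> 1 \<longrightarrow> 0 < f x"
    and bdd: "bdd_above {f s / f t - s / t | s t. 0 < s \<and> s < t \<and> t \<le> 1}"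
    and r_def: "r = Sup {f s / f t - s / t | s t. 0 < s \<and> s < t \<and> t \<le> 1}"
    and r_lt: "r < 1"
    and p: "is_dist p" and q: "is_dist q"
    and C: "is_coupling C p q"
    and G: "greedy_run p q G"
  shows "sum_list (map f G) \<le> 1 / (1 - r) * F_cost f C"
proof -
  let ?S = "{f s / f t - s / t | s t. 0 < s \<and> s < t \<and> t \<le> 1}"
  have mem: "f s / f t - s / t \<le> r" if "0 < s" "s < t" "t \<le> 1" for s t
  proof -
    have "f s / f t - s / t \<in> ?S" using that by blast
    then show ?thesis unfolding r_def by (rule cSup_upper[OF _ bdd])
  qed
  have r_ineq: "f z - z / x * f x \<le> r * f x" if "0 < z" "z < x" "x \<le> 1" for z x
  proof -
    have fx: "0 < f x" using fpos that by auto
    have "f z / f x - z / x \<le> r" using mem that by blast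
    then have "(f z / f x - z / x) * f x \<le> r * f x" using fx by (intro mult_right_mono) auto
    then show ?thesis using fx by (simp add: algebra_simps)
  qed
  have c: "\<forall>x\<in>{0..1}. \<forall>y\<in>{0..1}. \<forall>u\<ge>0. \<forall>v\<ge>0. u + v = 1 \<longrightarrow> f (u *\<^sub>R x + v *\<^sub>R y) \<ge> u * f x + v * f y"
    using conc concave_on_iff by blast
  have "f ((1/2) *\<^sub>R 1 + (1/2) *\<^sub>R 0) \<ge> (1/2) * f 1 + (1/2) * f 0"
    by (intro c[rule_format]) auto
  then have half: "f (1/2) \<ge> f 1 / 2" using f0 by simp
  have f1: "0 < f 1" using fpos by auto
  have "f (1/2) / f 1 - (1/2) / 1 \<le> r" using mem[of "1/2" 1] by simp
  moreover have "f (1/2) / f 1 \<ge> 1/2" using half f1 by (simp add: field_simps)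
  ultimately have r0: "0 \<le> r" by linarith
  interpret costf f r
    using conc nonneg f0 fpos r0 r_ineq by unfold_locales auto
  have "(1 - r) * sum_list (map f G) \<le> Psi f p q"
    using greedy_bound[OF G dist_subdist[OF p] dist_subdist[OF q]] .
  also have "\<dots> \<le> F_cost f C" using lower_bound[OF p q C] .
  finally have "(1 - r) * sum_list (map f G) \<le> F_cost f C" .
  then show ?thesis using r_lt by (simp add: field_simps)
qed


end
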